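(* Let $\rho$ be an involution of $\Lambda_{K3}=II_{3,19}$ with eigenlattices $S=\Lambda_{K3}^{+}$ (hyperbolic, $2$-elementary) and $T=\Lambda_{K3}^{-}$, and let $e\in T$ be primitive isotropic. Put $\Lambda_{ias}=e^\perp/e\cong II_{2,18}$ (perp taken in $\Lambda_{K3}$), with the induced involution $\rho_{ias}$ and eigenlattices $\Lambda_{ias}^{\pm}$, so that $\Lambda_{ias}^-=\bar T:=(e^\perp\cap T)/e$. Then the projection $e^\perp\to\Lambda_{ias}$ embeds $S$ into $\Lambda_{ias}^+$, and: if $e$ has divisibility $1$ in $T$, then $S=\Lambda_{ias}^+$; if $e$ has divisibility $2$ in $T$, then $S$ is a sublattice of index $2$ in $\Lambda_{ias}^+$ containing $(1+\rho_{ias})\Lambda_{ias}=2(\Lambda_{ias}^+)^*$.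
   Context: A lattice $H$ is $2$-elementary if $H^*/H\cong(\mathbb{Z}/2)^a$. The divisibility of $e\in T$ is the positive generator of $e\cdot T$. $II_{p,q}$ denotes the even unimodular lattice of signature $(p,q)$. *)

theory Defs
  imports "HOL-Analysis.Analysis"
begin

text \<open>The K3 lattice is modelled as the integer points of real^22, with
  bilinear form given by an integral Gram matrix G.\<close>

type_synonym v22 = "real^22"

definition lat :: "v22 set" where
  "lat = {x. \<forall>i. x$i \<in> \<int>}"

definition bf :: "real^22^22 \<Rightarrow> v22 \<Rightarrow> v22 \<Rightarrow> real" where
  "bf G x y = x \<bullet> (G *v y)"

definition int_matrix :: "real^22^22 \<Rightarrow> bool" where
  "int_matrix M \<longleftrightarrow> (\<forall>i j. M$i$j \<in> \<int>)"

definition pos_def_on :: "real^22^22 \<Rightarrow> v22 set \<Rightarrow> bool" where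
  "pos_def_on G W \<longleftrightarrow> (\<forall>w\<in>W. w \<noteq> 0 \<longrightarrow> bf G w w > 0)"

definition neg_def_on :: "real^22^22 \<Rightarrow> v22 set \<Rightarrow> bool" where
  "neg_def_on G W \<longleftrightarrow> (\<forall>w\<in>W. w \<noteq> 0 \<longrightarrow> bf G w w < 0)"

text \<open>Signature (p,q) of the form restricted to a real subspace V:
  p = maximal dimension of a positive definite subspace, q likewise for negative
  definite subspaces, and p + q = dim V (nondegeneracy).\<close>
definition has_signature :: "real^22^22 \<Rightarrow> v22 set \<Rightarrow> nat \<Rightarrow> nat \<Rightarrow> bool" where
  "has_signature G V p q \<longleftrightarrow>
     (\<exists>W. subspace W \<and> W \<subseteq> V \<and> dim W = p \<and> pos_def_on G W) \<and>
     (\<forall>W. subspace W \<and> W \<subseteq> V \<and> pos_def_on G W \<longrightarrow> dim W \<le> p) \<and>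
     (\<exists>W. subspace W \<and> W \<subseteq> V \<and> dim W = q \<and> neg_def_on G W) \<and>
     (\<forall>W. subspace W \<and> W \<subseteq> V \<and> neg_def_on G W \<longrightarrow> dim W \<le> q) \<and>
     p + q = dim V"

text \<open>G is the Gram matrix of an even unimodular lattice of signature (p,q),
  i.e. (up to isometry) of II_{p,q}.\<close>
definition even_unimodular_sig :: "real^22^22 \<Rightarrow> nat \<Rightarrow> nat \<Rightarrow> bool" where
  "even_unimodular_sig G p q \<longleftrightarrow>
     int_matrix G \<and> transpose G = G \<and> (det G = 1 \<or> det G = -1) \<and>
     (\<forall>x\<in>lat. \<exists>k::int. bf G x x = 2 * of_int k) \<and>
     has_signature G UNIV p q"

definition lattice_involution :: "real^22^22 \<Rightarrow> real^22^22 \<Rightarrow> bool" where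
  "lattice_involution G R \<longleftrightarrow>
     int_matrix R \<and> R ** R = mat 1 \<and>
     (\<forall>x\<in>lat. \<forall>y\<in>lat. bf G (R *v x) (R *v y) = bf G x y)"

definition eig_plus :: "real^22^22 \<Rightarrow> v22 set" where
  "eig_plus R = {x\<in>lat. R *v x = x}"

definition eig_minus :: "real^22^22 \<Rightarrow> v22 set" where
  "eig_minus R = {x\<in>lat. R *v x = - x}"

definition hyperbolic :: "real^22^22 \<Rightarrow> v22 set \<Rightarrow> bool" where
  "hyperbolic G M \<longleftrightarrow> (\<exists>n. has_signature G (span M) 1 n)"

definition dual_lat :: "real^22^22 \<Rightarrow> v22 set \<Rightarrow> v22 set" where
  "dual_lat G H = {v\<in>span H. \<forall>h\<in>H. bf G v h \<in> \<int>}"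

text \<open>2-elementary: H^*/H is an elementary abelian 2-group, i.e. 2 H^* \<subseteq> H.\<close>
definition two_elementary :: "real^22^22 \<Rightarrow> v22 set \<Rightarrow> bool" where
  "two_elementary G H \<longleftrightarrow> (\<forall>v\<in>dual_lat G H. 2 *\<^sub>R v \<in> H)"

definition primitive_in :: "v22 set \<Rightarrow> v22 \<Rightarrow> bool" where
  "primitive_in M e \<longleftrightarrow> e \<in> M \<and> e \<noteq> 0 \<and>
     (\<forall>y\<in>M. \<forall>n::int. e = of_int n *\<^sub>R y \<longrightarrow> \<bar>n\<bar> = 1)"

definition has_divisibility :: "real^22^22 \<Rightarrow> v22 set \<Rightarrow> v22 \<Rightarrow> int \<Rightarrow> bool" where
  "has_divisibility G M e d \<longleftrightarrow> d > 0 \<and>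
     (\<lambda>t. bf G e t) ` M = {of_int (d * k) | k. True}"

definition eperp :: "real^22^22 \<Rightarrow> v22 \<Rightarrow> v22 set" where
  "eperp G e = {x\<in>lat. bf G e x = 0}"

text \<open>Preimage in e^\<perp> of \<Lambda>_ias^+ = (e^\<perp>/e)^{\<rho>_ias}: classes [x] with \<rho>x - x \<in> Z e.\<close>
definition ias_plus_pre :: "real^22^22 \<Rightarrow> real^22^22 \<Rightarrow> v22 \<Rightarrow> v22 set" where
  "ias_plus_pre G R e = {x\<in>eperp G e. \<exists>k::int. R *v x - x = of_int k *\<^sub>R e}"

text \<open>Preimage in e^\<perp> of the image of S under e^\<perp> \<rightarrow> e^\<perp>/e: S + Z e.\<close>
definition S_pre :: "real^22^22 \<Rightarrow> v22 \<Rightarrow> v22 set" where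
  "S_pre R e = {s + of_int k *\<^sub>R e | s k. s \<in> eig_plus R}"

end

theory Submission
  imports Defs
begin

lemma lat_iff: "x \<in> lat \<longleftrightarrow> (\<forall>i. x$i \<in> \<int>)"
  by (simp add: lat_def)

lemma inner_Ints:
  fixes x y :: "real^'n"
  assumes "\<forall>i. x$i \<in> \<int>" "\<forall>i. y$i \<in> \<int>"
  shows "x \<bullet> y \<in> \<int>"
  unfolding inner_vec_def using assms by (auto intro!: Ints_sum Ints_mult)

lemma lat_add: "x \<in> lat \<Longrightarrow> y \<in> lat \<Longrightarrow> x + y \<in> lat"
  by (auto simp: lat_iff)
lemma lat_diff: "x \<in> lat \<Longrightarrow> y \<in> lat \<Longrightarrow> x - y \<in> lat"
  by (auto simp: lat_iff)
lemma lat_uminus: "x \<in> lat \<Longrightarrow> - x \<in> lat"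
  by (auto simp: lat_iff)
lemma lat_zero: "0 \<in> lat"
  by (auto simp: lat_iff)
lemma lat_scale: "x \<in> lat \<Longrightarrow> of_int k *\<^sub>R x \<in> lat"
  by (auto simp: lat_iff)
lemma lat_axis: "axis i 1 \<in> lat"
  by (auto simp: lat_iff axis_def)

lemma int_matrix_lat: "int_matrix M \<Longrightarrow> x \<in> lat \<Longrightarrow> M *v x \<in> lat"
  unfolding lat_iff int_matrix_def matrix_vector_mult_def
  by (auto intro!: Ints_sum Ints_mult)

lemma bf_Ints: "int_matrix G \<Longrightarrow> x \<in> lat \<Longrightarrow> y \<in> lat \<Longrightarrow> bf G x y \<in> \<int>"
  unfolding bf_def using int_matrix_lat[of G y] by (auto simp: lat_iff intro!: inner_Ints)

lemma bf_add_left: "bf G (x + y) z = bf G x z + bf G y z"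
  by (simp add: bf_def inner_add_left)
lemma bf_add_right: "bf G z (x + y) = bf G z x + bf G z y"
  by (simp add: bf_def inner_add_right matrix_vector_right_distrib)
lemma bf_diff_left: "bf G (x - y) z = bf G x z - bf G y z"
  by (simp add: bf_def inner_diff_left)
lemma bf_diff_right: "bf G z (x - y) = bf G z x - bf G z y"
  by (simp add: bf_def inner_diff_right matrix_vector_mult_diff_distrib)
lemma bf_neg_left: "bf G (- x) z = - bf G x z"
  by (simp add: bf_def)
lemma bf_neg_right: "bf G z (- x) = - bf G z x"
  by (simp add: bf_def vec.neg)
lemma bf_scale_left: "bf G (c *\<^sub>R x) z = c * bf G x z"
  by (simp add: bf_def)
lemma bf_scale_right: "bf G z (c *\<^sub>R x) = c * bf G z x"
  by (simp add: bf_def matrix_vector_mult_scaleR)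
lemma bf_zero_left: "bf G 0 z = 0" by (simp add: bf_def)
lemma bf_zero_right: "bf G z 0 = 0" by (simp add: bf_def)

lemmas bf_simps = bf_add_left bf_add_right bf_diff_left bf_diff_right bf_neg_left bf_neg_right
  bf_scale_left bf_scale_right bf_zero_left bf_zero_right

lemma bf_sym: "transpose G = G \<Longrightarrow> bf G x y = bf G y x"
  unfolding bf_def
  by (metis dot_lmul_matrix inner_commute vector_transpose_matrix)

lemma bf_matrix: "bf G x y = x \<bullet> (G *v y)" by (simp add: bf_def)

lemma bf_as_matrix: "bf G (A *v x) (A *v y) = bf (transpose A ** G ** A) x y"
  unfolding bf_def
  by (metis dot_lmul_matrix matrix_vector_mul_assoc vector_transpose_matrix)

lemma bf_axis: "bf G (axis i 1) (axis j 1) = G$i$j"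
  unfolding bf_def matrix_vector_mult_basis column_def by (subst inner_commute) (simp add: inner_axis)

lemma det_Ints:
  fixes A :: "real^'n^'n"
  assumes "\<forall>i j. A$i$j \<in> \<int>"
  shows "det A \<in> \<int>"
  unfolding det_def using assms by (auto intro!: Ints_sum Ints_mult Ints_prod)

lemma lat_inner_Ints: "x \<in> lat \<Longrightarrow> y \<in> lat \<Longrightarrow> x \<bullet> y \<in> \<int>"
  by (auto simp: lat_iff intro!: inner_Ints)

lemma primitive_exists:
  assumes s: "s \<in> lat" "s \<noteq> 0"
  shows "\<exists>v c. v \<in> lat \<and> c \<in> lat \<and> c \<bullet> v = 1 \<and> (\<exists>g::int. g > 0 \<and> s = of_int g *\<^sub>R v)"
proof -
  define N where "N = {m::nat. m > 0 \<and> (\<exists>c\<in>lat. c \<bullet> s = real m)}"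
  obtain i where i: "s$i \<noteq> 0" using s(2) by (metis vec_eq_iff zero_index)
  obtain k where k: "s$i = of_int k" using s(1) by (auto simp: lat_iff elim: Ints_cases)
  have "nat \<bar>k\<bar> \<in> N"
  proof -
    have "(of_int (sgn k) *\<^sub>R axis i 1) \<bullet> s = of_int (sgn k) * s$i"
      by (simp add: inner_commute[of _ s] inner_axis)
    also have "\<dots> = of_int (sgn k * k)" using k by simp
    also have "\<dots> = of_int \<bar>k\<bar>" by (simp add: abs_sgn mult.commute)
    also have "\<dots> = real (nat \<bar>k\<bar>)" by simp
    finally have "(of_int (sgn k) *\<^sub>R axis i 1) \<bullet> s = real (nat \<bar>k\<bar>)" .
    then show ?thesis unfolding N_def using i k by (auto intro!: bexI[of _ "of_int (sgn k) *\<^sub>R axis i 1"] lat_scale lat_axis)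
  qed
  then have NE: "N \<noteq> {}" by auto
  define g where "g = Least (\<lambda>m. m \<in> N)"
  have gN: "g \<in> N" unfolding g_def using NE by (metis LeastI ex_in_conv)
  have gmin: "\<And>m. m \<in> N \<Longrightarrow> g \<le> m" unfolding g_def by (simp add: Least_le)
  obtain c0 where c0: "c0 \<in> lat" "c0 \<bullet> s = real g" "g > 0" using gN unfolding N_def by auto
  have dv: "\<forall>j. \<exists>q::int. s$j = of_int q * real g"
  proof
    fix j
    obtain a where a: "s$j = of_int a" using s(1) by (auto simp: lat_iff elim: Ints_cases)
    define q where "q = a div int g"
    define r where "r = a mod int g"
    have ar: "a = q * int g + r" unfolding q_def r_def by simp
    have r0: "0 \<le> r" "r < int g" unfolding r_def using c0(3) by auto
    have "(axis j 1 - of_int q *\<^sub>R c0) \<bullet> s = of_int r"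
      using a c0(2) ar by (simp add: inner_diff_left inner_commute[of "axis j 1"] inner_axis)
    moreover have "axis j 1 - of_int q *\<^sub>R c0 \<in> lat" by (intro lat_diff lat_axis lat_scale c0(1))
    ultimately have "r > 0 \<Longrightarrow> nat r \<in> N" unfolding N_def by (auto intro!: bexI)
    then have "r = 0" using gmin r0 by (metis le_less linorder_not_le nat_less_iff)
    then show "\<exists>q::int. s$j = of_int q * real g" using a ar by (auto intro!: exI[of _ q])
  qed
  define v where "v = (1 / real g) *\<^sub>R s"
  have vl: "v \<in> lat" unfolding lat_iff v_def
  proof
    fix j obtain q where "s$j = of_int q * real g" using dv by blast
    then show "((1 / real g) *\<^sub>R s) $ j \<in> \<int>" using c0(3) by simp
  qed
  have "c0 \<bullet> v = 1" unfolding v_def using c0 by simp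
  moreover have "s = of_int (int g) *\<^sub>R v" unfolding v_def using c0(3) by simp
  ultimately show ?thesis using vl c0 by (intro exI[of _ v] exI[of _ c0]) (auto intro!: exI[of _ "int g"])
qed

lemma ext_fun:
  fixes f :: "real^22 \<Rightarrow> real"
  assumes lin: "linear f"
  shows "subspace V \<Longrightarrow> (\<forall>x\<in>V \<inter> lat. f x \<in> \<int>) \<Longrightarrow> \<exists>c\<in>lat. \<forall>x\<in>V \<inter> lat. f x = c \<bullet> x"
proof (induction "dim V" arbitrary: V rule: less_induct)
  case less
  show ?case
  proof (cases "V \<inter> lat \<subseteq> {0}")
    case True
    then show ?thesis using lin by (auto intro!: bexI[of _ 0] lat_zero simp: linear_0)
  next
    case False
    then obtain s where s: "s \<in> V" "s \<in> lat" "s \<noteq> 0" by auto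
    obtain v c0 g where v: "v \<in> lat" "c0 \<in> lat" "c0 \<bullet> v = 1" "g > (0::int)" "s = of_int g *\<^sub>R v"
      using primitive_exists[OF s(2,3)] by blast
    have vV: "v \<in> V"
    proof -
      have "v = (1 / of_int g) *\<^sub>R s" using v(4,5) by simp
      then show ?thesis using s(1) less.prems(1) by (simp add: subspace_scale)
    qed
    define V' where "V' = V \<inter> {x. c0 \<bullet> x = 0}"
    have sV': "subspace V'" unfolding V'_def
      using less.prems(1) by (intro subspace_inter subspace_hyperplane)
    have "v \<notin> V'" unfolding V'_def using v(3) by auto
    then have "V' \<subset> V" unfolding V'_def using vV by auto
    then have "dim V' < dim V" using sV' less.prems(1) by (metis dim_psubset span_eq_iff)
    moreover have "\<forall>x\<in>V' \<inter> lat. f x \<in> \<int>" using less.prems(2) unfolding V'_def by auto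
    ultimately obtain c1 where c1: "c1 \<in> lat" "\<forall>x\<in>V' \<inter> lat. f x = c1 \<bullet> x"
      using less.hyps sV' by blast
    have fv: "f v \<in> \<int>" using less.prems(2) vV v(1) by auto
    then obtain fvi where fvi: "f v = of_int fvi" by (auto elim: Ints_cases)
    obtain ci where ci: "c1 \<bullet> v = of_int ci" using lat_inner_Ints[OF c1(1) v(1)] by (auto elim: Ints_cases)
    define c where "c = c1 + of_int (fvi - ci) *\<^sub>R c0"
    have cl: "c \<in> lat" unfolding c_def by (intro lat_add lat_scale c1(1) v(2))
    have "\<forall>x\<in>V \<inter> lat. f x = c \<bullet> x"
    proof
      fix x assume x: "x \<in> V \<inter> lat"
      obtain m where m: "c0 \<bullet> x = of_int m" using lat_inner_Ints[OF v(2)] x by (auto elim: Ints_cases)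
      define x' where "x' = x - of_int m *\<^sub>R v"
      have "x' \<in> V' \<inter> lat" unfolding x'_def V'_def using x vV v(1,3) m less.prems(1)
        by (auto intro!: lat_diff lat_scale subspace_diff subspace_scale simp: inner_diff_right)
      then have "f x' = c1 \<bullet> x'" using c1(2) by auto
      moreover have "f x = f x' + of_int m * f v"
        unfolding x'_def using lin by (simp add: linear_diff linear_scale)
      ultimately show "f x = c \<bullet> x"
        unfolding c_def x'_def using m fvi ci by (simp add: inner_add_left inner_diff_right algebra_simps)
    qed
    then show ?thesis using cl by blast
  qed
qed

lemma R_iso_matrix:
  assumes "lattice_involution G R"
  shows "transpose R ** G ** R = G"
proof -
  have "\<forall>i j. (transpose R ** G ** R)$i$j = G$i$j"
  proof (intro allI)
    fix i j
    have "(transpose R ** G ** R)$i$j = bf G (R *v axis i 1) (R *v axis j 1)"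
      by (simp add: bf_as_matrix bf_axis)
    also have "\<dots> = bf G (axis i 1) (axis j 1)"
      using assms lat_axis unfolding lattice_involution_def by blast
    finally show "(transpose R ** G ** R)$i$j = G$i$j" by (simp add: bf_axis)
  qed
  then show ?thesis by (simp add: vec_eq_iff)
qed

lemma R_iso: "lattice_involution G R \<Longrightarrow> bf G (R *v x) (R *v y) = bf G x y"
  using R_iso_matrix[of G R] by (simp add: bf_as_matrix)

lemma RR: "lattice_involution G R \<Longrightarrow> R *v (R *v x) = x"
  unfolding lattice_involution_def by (simp add: matrix_vector_mul_assoc)

lemma R_swap: "lattice_involution G R \<Longrightarrow> bf G (R *v x) y = bf G x (R *v y)"
  using R_iso[of G R "R *v x" y] RR[of G R x] by simp

lemma nondeg:
  assumes "det G \<noteq> 0" "transpose G = G" "\<forall>i. bf G d (axis i 1) = 0"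
  shows "d = 0"
proof -
  have "G *v d = 0"
  proof (subst vec_eq_iff, intro allI)
    fix i
    have "bf G d (axis i 1) = bf G (axis i 1) d" using assms(2) by (rule bf_sym)
    also have "\<dots> = (G *v d)$i" by (simp add: bf_def inner_axis inner_commute[of "axis i 1"])
    finally show "(G *v d)$i = 0$i" using assms(3) by simp
  qed
  obtain B where "B ** G = mat 1" using assms(1)
    unfolding invertible_det_nz[symmetric] invertible_def by blast
  then have "d = B *v (G *v d)" by (simp add: matrix_vector_mul_assoc)
  then show ?thesis using \<open>G *v d = 0\<close> by simp
qed

lemma unimod_rep:
  assumes "even_unimodular_sig G p q" "c \<in> lat"
  shows "\<exists>x0\<in>lat. \<forall>y. bf G x0 y = c \<bullet> y"
proof -
  have Gi: "int_matrix G" and Gs: "transpose G = G" and Gd: "det G = 1 \<or> det G = -1"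
    using assms(1) unfolding even_unimodular_sig_def by auto
  have d0: "det G \<noteq> 0" using Gd by auto
  define x0 where "x0 = (\<chi> k. det(\<chi> i j. if j=k then c$i else G$i$j) / det G)"
  have Gx: "G *v x0 = c" using cramer[OF d0, of x0 c] x0_def by simp
  have "x0 \<in> lat" unfolding lat_iff x0_def
  proof
    fix k
    have "det(\<chi> i j. if j=k then c$i else G$i$j) \<in> \<int>"
      using Gi assms(2) unfolding int_matrix_def lat_iff by (intro det_Ints) auto
    then show "(\<chi> k. det(\<chi> i j. if j=k then c$i else G$i$j) / det G) $ k \<in> \<int>"
      using Gd by (auto simp: minus_in_Ints_iff)
  qed
  moreover have "\<forall>y. bf G x0 y = c \<bullet> y"
    using Gs Gx by (metis bf_def bf_sym inner_commute)
  ultimately show ?thesis by blast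
qed

lemma decomp_zero:
  assumes inv: "lattice_involution G R" and "det G \<noteq> 0" "transpose G = G"
    and S0: "\<forall>s\<in>lat. R *v s = s \<longrightarrow> bf G d s = 0"
    and T0: "\<forall>z\<in>lat. R *v z = - z \<longrightarrow> bf G d z = 0"
  shows "d = 0"
proof (rule nondeg[OF assms(2,3)], intro allI)
  fix i
  define u :: "real^22" where "u = axis i 1"
  have Ri: "int_matrix R" using inv unfolding lattice_involution_def by auto
  have ul: "u \<in> lat" "R *v u \<in> lat" unfolding u_def using lat_axis int_matrix_lat[OF Ri] by auto
  have "R *v (u + R *v u) = u + R *v u" using RR[OF inv, of u] by (simp add: matrix_vector_right_distrib)
  then have "bf G d (u + R *v u) = 0"
    using S0 lat_add[OF ul] by blast
  have "R *v (u - R *v u) = - (u - R *v u)" using RR[OF inv, of u] by (simp add: matrix_vector_mult_diff_distrib)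
  then have "bf G d (u - R *v u) = 0"
    using T0 lat_diff[OF ul] by blast
  moreover note \<open>bf G d (u + R *v u) = 0\<close>
  ultimately have "bf G d u = 0" by (simp add: bf_simps)
  then show "bf G d (axis i 1) = 0" unfolding u_def .
qed

lemma coset_eq:
  fixes H :: "'a::ab_group_add set"
  assumes "\<And>x y. x \<in> H \<Longrightarrow> y \<in> H \<Longrightarrow> x + y \<in> H" "\<And>x. x \<in> H \<Longrightarrow> - x \<in> H"
    and "a - b \<in> H"
  shows "(\<lambda>q. a + q) ` H = (\<lambda>q. b + q) ` H"
proof -
  have 1: "(\<lambda>q. a + q) ` H \<subseteq> (\<lambda>q. b + q) ` H"
  proof
    fix z assume "z \<in> (\<lambda>q. a + q) ` H"
    then obtain q where q: "q \<in> H" "z = a + q" by auto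
    then have "z = b + ((a - b) + q)" by simp
    then show "z \<in> (\<lambda>q. b + q) ` H" using assms q by blast
  qed
  have 2: "(\<lambda>q. b + q) ` H \<subseteq> (\<lambda>q. a + q) ` H"
  proof
    fix z assume "z \<in> (\<lambda>q. b + q) ` H"
    then obtain q where q: "q \<in> H" "z = b + q" by auto
    then have "z = a + (- (a - b) + q)" by simp
    then show "z \<in> (\<lambda>q. a + q) ` H" using assms q by blast
  qed
  show ?thesis using 1 2 by blast
qed

lemma coset_neq:
  fixes H :: "'a::ab_group_add set"
  assumes "0 \<in> H" "(\<lambda>q. a + q) ` H = (\<lambda>q. b + q) ` H"
  shows "a - b \<in> H"
proof -
  have "a \<in> (\<lambda>q. b + q) ` H" using assms by (metis add.right_neutral image_eqI)
  then obtain q where "q \<in> H" "a = b + q" by auto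
  then show ?thesis by simp
qed

lemma linear_bf_right: "linear (\<lambda>z. c * bf G e z)"
  by (rule linearI) (simp_all add: bf_simps algebra_simps)

lemma mv_scaleR: "(R::real^'n^'m) *v (c *\<^sub>R x) = c *\<^sub>R (R *v x)"
  by (simp add: vec_eq_iff matrix_vector_mult_def sum_distrib_left algebra_simps)

lemma subspace_eig: "subspace {x. (R::real^'n^'n) *v x = a *\<^sub>R x}"
  unfolding subspace_def
  by (auto simp: matrix_vector_right_distrib mv_scaleR scaleR_add_right)

lemma two_scale: "(of_int (2*k)::real) *\<^sub>R (e::real^'n) = of_int k *\<^sub>R e + of_int k *\<^sub>R e"
  by (simp add: scaleR_add_left[symmetric])

theorem lemma5p12:
  fixes G R :: "real^22^22" and e :: "real^22"
  assumes K3: "even_unimodular_sig G 3 19"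
    and inv: "lattice_involution G R"
    and hypS: "hyperbolic G (eig_plus R)"
    and twoS: "two_elementary G (eig_plus R)"
    and prim: "primitive_in (eig_minus R) e"
    and iso: "bf G e e = 0"
  shows
    "eig_plus R \<subseteq> eperp G e
     \<and> (\<forall>s1\<in>eig_plus R. \<forall>s2\<in>eig_plus R. (\<exists>k::int. s1 - s2 = of_int k *\<^sub>R e) \<longrightarrow> s1 = s2)
     \<and> eig_plus R \<subseteq> ias_plus_pre G R e
     \<and> (has_divisibility G (eig_minus R) e 1 \<longrightarrow> S_pre R e = ias_plus_pre G R e)
     \<and> (has_divisibility G (eig_minus R) e 2 \<longrightarrow>
          card ((\<lambda>x. (\<lambda>q. x + q) ` S_pre R e) ` ias_plus_pre G R e) = 2
          \<and> (\<forall>x\<in>eperp G e. x + R *v x \<in> S_pre R e)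
          \<and> (\<forall>x\<in>eperp G e. \<exists>v\<in>dual_lat G (ias_plus_pre G R e). \<exists>c::real.
                x + R *v x = 2 *\<^sub>R v + c *\<^sub>R e)
          \<and> (\<forall>v\<in>dual_lat G (ias_plus_pre G R e). \<exists>x\<in>eperp G e. \<exists>c::real.
                2 *\<^sub>R v = x + R *v x + c *\<^sub>R e))"
proof -
  have Gi: "int_matrix G" and Gs: "transpose G = G" and Gd: "det G = 1 \<or> det G = -1"
    using K3 unfolding even_unimodular_sig_def by auto
  have d0: "det G \<noteq> 0" using Gd by auto
  have Ri: "int_matrix R" using inv unfolding lattice_involution_def by auto
  have el: "e \<in> lat" and Re: "R *v e = - e" and e0: "e \<noteq> 0"
    using prim unfolding primitive_in_def eig_minus_def by auto
  have sym: "\<And>x y. bf G x y = bf G y x" using Gs bf_sym by blast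
  have swap: "\<And>x y. bf G (R *v x) y = bf G x (R *v y)" using R_swap[OF inv] .
  have RRx: "\<And>x. R *v (R *v x) = x" using RR[OF inv] .
  have Rl: "\<And>x. x \<in> lat \<Longrightarrow> R *v x \<in> lat" using int_matrix_lat[OF Ri] .
  note mvs = matrix_vector_right_distrib matrix_vector_mult_diff_distrib mv_scaleR vec.neg
  have bfI: "\<And>x y. x \<in> lat \<Longrightarrow> y \<in> lat \<Longrightarrow> bf G x y \<in> \<int>" using bf_Ints[OF Gi] .
  have eS: "\<And>s. R *v s = s \<Longrightarrow> bf G e s = 0"
  proof -
    fix s :: "real^22" assume Rs: "R *v s = s"
    have "bf G e s = bf G (R *v e) (R *v s)" using R_iso[OF inv] by simp
    also have "\<dots> = - bf G e s" using Re Rs by (simp add: bf_simps)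
    finally show "bf G e s = 0" by simp
  qed
  have C1: "eig_plus R \<subseteq> eperp G e"
    using eS by (auto simp: eig_plus_def eperp_def)
  have C2: "\<forall>s1\<in>eig_plus R. \<forall>s2\<in>eig_plus R. (\<exists>k::int. s1 - s2 = of_int k *\<^sub>R e) \<longrightarrow> s1 = s2"
  proof (intro ballI impI)
    fix s1 s2 assume s: "s1 \<in> eig_plus R" "s2 \<in> eig_plus R" and "\<exists>k::int. s1 - s2 = of_int k *\<^sub>R e"
    then obtain k where k: "s1 - s2 = of_int k *\<^sub>R e" by blast
    have "R *v (s1 - s2) = s1 - s2" using s by (simp add: eig_plus_def mvs)
    then have "of_int k *\<^sub>R e = - (of_int k *\<^sub>R e)" using k Re by (simp add: mvs)
    then have h2: "of_int k *\<^sub>R e + of_int k *\<^sub>R e = 0" by (metis add.right_inverse)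
    have "(2 * of_int k) *\<^sub>R e = 2 *\<^sub>R (of_int k *\<^sub>R e)" by simp
    also have "\<dots> = 0" using h2 by (simp only: scaleR_2)
    finally have "(2 * of_int k) *\<^sub>R e = 0" .
    then have "2 * (of_int k::real) = 0" using e0 by (meson scaleR_eq_0_iff)
    then have "k = 0" by simp
    then show "s1 = s2" using k by simp
  qed
  have C3: "eig_plus R \<subseteq> ias_plus_pre G R e"
    using C1 by (auto simp: eig_plus_def ias_plus_pre_def intro!: exI[of _ 0])
  have Pdef: "\<And>x. x \<in> ias_plus_pre G R e \<longleftrightarrow> x \<in> lat \<and> bf G e x = 0 \<and> (\<exists>k::int. R *v x - x = of_int k *\<^sub>R e)"
    by (auto simp: ias_plus_pre_def eperp_def)
  have Spdef: "\<And>z. z \<in> S_pre R e \<longleftrightarrow> (\<exists>s k. s \<in> eig_plus R \<and> z = s + of_int k *\<^sub>R e)"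
    by (auto simp: S_pre_def)
  have Sp_prop: "\<And>z. z \<in> S_pre R e \<Longrightarrow> z \<in> lat \<and> bf G e z = 0 \<and> (\<exists>k::int. R *v z - z = of_int (2*k) *\<^sub>R e)"
  proof -
    fix z assume "z \<in> S_pre R e"
    then obtain s k where sk: "s \<in> eig_plus R" "z = s + of_int k *\<^sub>R e" using Spdef by blast
    have "R *v z - z = of_int (2*(-k)) *\<^sub>R e" unfolding two_scale using sk Re by (simp add: eig_plus_def mvs)
    moreover have "z \<in> lat" using sk el by (auto simp: eig_plus_def intro!: lat_add lat_scale)
    moreover have "bf G e z = 0" using sk eS iso by (simp add: eig_plus_def bf_simps)
    ultimately show "z \<in> lat \<and> bf G e z = 0 \<and> (\<exists>k::int. R *v z - z = of_int (2*k) *\<^sub>R e)" by blast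
  qed
  have Sp_sub: "S_pre R e \<subseteq> ias_plus_pre G R e"
    using Sp_prop Pdef by blast
  have P_even: "\<And>x m. x \<in> lat \<Longrightarrow> R *v x - x = of_int (2*m) *\<^sub>R e \<Longrightarrow> x \<in> S_pre R e"
  proof -
    fix x m assume x: "x \<in> lat" "R *v x - x = of_int (2*m) *\<^sub>R e"
    have Rx: "R *v x = x + (of_int m *\<^sub>R e + of_int m *\<^sub>R e)"
      using x(2) unfolding two_scale by (simp add: diff_eq_eq add.commute)
    have "R *v (x + of_int m *\<^sub>R e) = x + of_int m *\<^sub>R e"
      using Rx Re by (simp add: mvs)
    then have "x + of_int m *\<^sub>R e \<in> eig_plus R" using x el by (auto simp: eig_plus_def intro!: lat_add lat_scale)
    moreover have "x = (x + of_int m *\<^sub>R e) + of_int (-m) *\<^sub>R e" by simp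
    ultimately show "x \<in> S_pre R e" using Spdef by blast
  qed
  have Sp_add: "\<And>x y. x \<in> S_pre R e \<Longrightarrow> y \<in> S_pre R e \<Longrightarrow> x + y \<in> S_pre R e"
  proof -
    fix x y assume "x \<in> S_pre R e" "y \<in> S_pre R e"
    then obtain s1 k1 s2 k2 where "s1 \<in> eig_plus R" "x = s1 + of_int k1 *\<^sub>R e" "s2 \<in> eig_plus R" "y = s2 + of_int k2 *\<^sub>R e"
      using Spdef by metis
    moreover have "s1 + s2 \<in> eig_plus R" using calculation by (auto simp: eig_plus_def mvs intro: lat_add)
    ultimately have "s1 + s2 \<in> eig_plus R \<and> x + y = (s1 + s2) + of_int (k1 + k2) *\<^sub>R e" by (simp add: algebra_simps)
    then show "x + y \<in> S_pre R e" using Spdef by blast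
  qed
  have Sp_neg: "\<And>x. x \<in> S_pre R e \<Longrightarrow> - x \<in> S_pre R e"
  proof -
    fix x assume "x \<in> S_pre R e"
    then obtain s1 k1 where "s1 \<in> eig_plus R" "x = s1 + of_int k1 *\<^sub>R e"
      using Spdef by metis
    moreover have "- s1 \<in> eig_plus R" using calculation by (auto simp: eig_plus_def mvs intro: lat_uminus)
    ultimately have "- s1 \<in> eig_plus R \<and> - x = (- s1) + of_int (- k1) *\<^sub>R e" by (simp add: algebra_simps)
    then show "- x \<in> S_pre R e" using Spdef by blast
  qed
  have Sp0: "0 \<in> S_pre R e" using P_even[of 0 0] lat_zero by simp
  have C4: "has_divisibility G (eig_minus R) e 1 \<longrightarrow> S_pre R e = ias_plus_pre G R e"
  proof
    assume "has_divisibility G (eig_minus R) e 1"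
    then have "of_int (1*1) \<in> (\<lambda>t. bf G e t) ` eig_minus R" unfolding has_divisibility_def by blast
    then obtain t where t: "t \<in> eig_minus R" "bf G e t = 1" by auto
    have "ias_plus_pre G R e \<subseteq> S_pre R e"
    proof
      fix x assume "x \<in> ias_plus_pre G R e"
      then obtain k where x: "x \<in> lat" "R *v x - x = of_int k *\<^sub>R e" using Pdef by blast
      have tl: "t \<in> lat" "R *v t = - t" using t by (auto simp: eig_minus_def)
      have "bf G (R *v x - x) t = of_int k" using x(2) t(2) by (simp add: bf_simps)
      moreover have "bf G (R *v x - x) t = - 2 * bf G x t" using swap[of x t] tl by (simp add: bf_simps)
      moreover obtain j where "bf G x t = of_int j" using bfI[OF x(1) tl(1)] by (auto elim: Ints_cases)
      ultimately have "k = 2 * (- j)" by simp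
      then show "x \<in> S_pre R e" using P_even x by blast
    qed
    then show "S_pre R e = ias_plus_pre G R e" using Sp_sub by blast
  qed
  have C5: "has_divisibility G (eig_minus R) e 2 \<longrightarrow>
          card ((\<lambda>x. (\<lambda>q. x + q) ` S_pre R e) ` ias_plus_pre G R e) = 2
          \<and> (\<forall>x\<in>eperp G e. x + R *v x \<in> S_pre R e)
          \<and> (\<forall>x\<in>eperp G e. \<exists>v\<in>dual_lat G (ias_plus_pre G R e). \<exists>c::real.
                x + R *v x = 2 *\<^sub>R v + c *\<^sub>R e)
          \<and> (\<forall>v\<in>dual_lat G (ias_plus_pre G R e). \<exists>x\<in>eperp G e. \<exists>c::real.
                2 *\<^sub>R v = x + R *v x + c *\<^sub>R e)"
  proof
    assume div2: "has_divisibility G (eig_minus R) e 2"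
    then have "of_int (2*1) \<in> (\<lambda>t. bf G e t) ` eig_minus R" unfolding has_divisibility_def by blast
    then obtain t2 where t2: "t2 \<in> eig_minus R" "bf G e t2 = 2" by auto
    have t2l: "t2 \<in> lat" "R *v t2 = - t2" using t2 by (auto simp: eig_minus_def)
    have Teven: "\<And>t. t \<in> eig_minus R \<Longrightarrow> \<exists>k::int. bf G e t = of_int (2*k)"
      using div2 unfolding has_divisibility_def by blast
    obtain c where c: "c \<in> lat" "\<forall>x\<in>{x. R *v x = (-1) *\<^sub>R x} \<inter> lat. (1/2) * bf G e x = c \<bullet> x"
    proof -
      have "\<forall>x\<in>{x. R *v x = (-1) *\<^sub>R x} \<inter> lat. (1/2) * bf G e x \<in> \<int>"
      proof
        fix x assume "x \<in> {x. R *v x = (-1) *\<^sub>R x} \<inter> lat"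
        then have "x \<in> eig_minus R" by (auto simp: eig_minus_def)
        then obtain k where "bf G e x = of_int (2*k)" using Teven by blast
        then show "(1/2) * bf G e x \<in> \<int>" by simp
      qed
      then show ?thesis using that ext_fun[OF linear_bf_right subspace_eig] by blast
    qed
    obtain x0 where x0: "x0 \<in> lat" "\<And>y. bf G x0 y = c \<bullet> y" using unimod_rep[OF K3 c(1)] by blast
    have "x0 - R *v x0 - e = 0"
    proof (rule decomp_zero[OF inv d0 Gs], safe)
      fix s assume s: "s \<in> lat" "R *v s = s"
      show "bf G (x0 - R *v x0 - e) s = 0"
        using swap[of x0 s] s eS by (simp add: bf_simps)
    next
      fix z assume z: "z \<in> lat" "R *v z = - z"
      have "(1/2) * bf G e z = c \<bullet> z" using c(2) z by auto
      then show "bf G (x0 - R *v x0 - e) z = 0"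
        using swap[of x0 z] z x0(2)[of z] by (simp add: bf_simps)
    qed
    then have x0e: "R *v (- x0) - (- x0) = e" by (simp add: mvs algebra_simps)
    define p0 where "p0 = - x0"
    have p0l: "p0 \<in> lat" unfolding p0_def using x0(1) by (rule lat_uminus)
    have p0R: "R *v p0 - p0 = e" using x0e unfolding p0_def .
    have p0e: "bf G e p0 = 0"
    proof -
      have "bf G (R *v e) p0 = bf G e (R *v p0)" by (rule swap)
      also have "R *v p0 = p0 + e" using p0R by (simp add: algebra_simps)
      finally show ?thesis using Re iso by (simp add: bf_simps)
    qed
    have p0P: "p0 \<in> ias_plus_pre G R e" using Pdef p0l p0e p0R by (auto intro!: exI[of _ 1])
    have p0nS: "p0 \<notin> S_pre R e"
    proof
      assume "p0 \<in> S_pre R e"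
      then obtain k where "R *v p0 - p0 = of_int (2*k) *\<^sub>R e" using Sp_prop by blast
      then have "(of_int (2*k) - 1) *\<^sub>R e = 0" using p0R by (simp add: algebra_simps)
      then have "of_int (2*k) - (1::real) = 0" using e0 by simp
      then have "2*k = 1" by linarith
      then show False by presburger
    qed
    have cosets: "(\<lambda>x. (\<lambda>q. x + q) ` S_pre R e) ` ias_plus_pre G R e
        = {(\<lambda>q. 0 + q) ` S_pre R e, (\<lambda>q. p0 + q) ` S_pre R e}"
    proof (rule set_eqI, rule iffI)
      fix A assume "A \<in> (\<lambda>x. (\<lambda>q. x + q) ` S_pre R e) ` ias_plus_pre G R e"
      then obtain x where x: "x \<in> ias_plus_pre G R e" "A = (\<lambda>q. x + q) ` S_pre R e" by auto
      then obtain k where xk: "x \<in> lat" "bf G e x = 0" "R *v x - x = of_int k *\<^sub>R e" using Pdef by blast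
      show "A \<in> {(\<lambda>q. 0 + q) ` S_pre R e, (\<lambda>q. p0 + q) ` S_pre R e}"
      proof (cases "even k")
        case True
        then obtain m where "k = 2*m" by (auto elim: evenE)
        then have "x - 0 \<in> S_pre R e" using P_even xk by simp
        then show ?thesis using x(2) coset_eq[OF Sp_add Sp_neg] by blast
      next
        case False
        then obtain m where m: "k = 2*m + 1" by (auto elim: oddE)
        have "R *v (x - p0) - (x - p0) = of_int (2*m) *\<^sub>R e"
          using xk(3) p0R m by (simp add: mvs algebra_simps)
        then have "x - p0 \<in> S_pre R e" using P_even lat_diff[OF xk(1) p0l] by blast
        then show ?thesis using x(2) coset_eq[OF Sp_add Sp_neg] by blast
      qed
    next
      fix A assume "A \<in> {(\<lambda>q. 0 + q) ` S_pre R e, (\<lambda>q. p0 + q) ` S_pre R e}"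
      moreover have "0 \<in> ias_plus_pre G R e" using Sp_sub Sp0 by blast
      ultimately show "A \<in> (\<lambda>x. (\<lambda>q. x + q) ` S_pre R e) ` ias_plus_pre G R e"
        using p0P by blast
    qed
    have neq: "(\<lambda>q. 0 + q) ` S_pre R e \<noteq> (\<lambda>q. p0 + q) ` S_pre R e"
    proof
      assume "(\<lambda>q. 0 + q) ` S_pre R e = (\<lambda>q. p0 + q) ` S_pre R e"
      then have "0 - p0 \<in> S_pre R e" using coset_neq[OF Sp0] by blast
      then have "p0 \<in> S_pre R e" using Sp_neg by fastforce
      then show False using p0nS by blast
    qed
    have Ca: "card ((\<lambda>x. (\<lambda>q. x + q) ` S_pre R e) ` ias_plus_pre G R e) = 2"
      unfolding cosets using neq by simp
    have plusS: "\<And>x. x \<in> lat \<Longrightarrow> x + R *v x \<in> eig_plus R"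
      using Rl RRx by (auto simp: eig_plus_def mvs intro: lat_add)
    have Cb: "\<forall>x\<in>eperp G e. x + R *v x \<in> S_pre R e"
    proof
      fix x assume "x \<in> eperp G e"
      then have "x + R *v x \<in> eig_plus R" using plusS by (auto simp: eperp_def)
      moreover have "x + R *v x = (x + R *v x) + of_int 0 *\<^sub>R e" by simp
      ultimately show "x + R *v x \<in> S_pre R e" using Spdef by blast
    qed
    have Cc: "\<forall>x\<in>eperp G e. \<exists>v\<in>dual_lat G (ias_plus_pre G R e). \<exists>c::real.
                x + R *v x = 2 *\<^sub>R v + c *\<^sub>R e"
    proof
      fix x assume x: "x \<in> eperp G e"
      then have xl: "x \<in> lat" and xe: "bf G e x = 0" by (auto simp: eperp_def)
      define v where "v = (1/2) *\<^sub>R (x + R *v x)"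
      have "x + R *v x \<in> ias_plus_pre G R e" using plusS[OF xl] C3 by blast
      then have vs: "v \<in> span (ias_plus_pre G R e)" unfolding v_def by (intro span_mul span_base)
      have "\<forall>h\<in>ias_plus_pre G R e. bf G v h \<in> \<int>"
      proof
        fix h assume "h \<in> ias_plus_pre G R e"
        then obtain k where h: "h \<in> lat" "R *v h - h = of_int k *\<^sub>R e" using Pdef by blast
        have Rh: "R *v h = h + of_int k *\<^sub>R e" using h(2) by (simp add: algebra_simps)
        have "bf G x e = 0" using xe sym by metis
        then have "bf G v h = bf G x h" unfolding v_def using swap[of x h] Rh by (simp add: bf_simps)
        then show "bf G v h \<in> \<int>" using bfI[OF xl h(1)] by simp
      qed
      then have "v \<in> dual_lat G (ias_plus_pre G R e)" using vs by (simp add: dual_lat_def)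
      moreover have "x + R *v x = 2 *\<^sub>R v + 0 *\<^sub>R e" unfolding v_def by simp
      ultimately show "\<exists>v\<in>dual_lat G (ias_plus_pre G R e). \<exists>c::real. x + R *v x = 2 *\<^sub>R v + c *\<^sub>R e" by blast
    qed
    have Cd: "\<forall>v\<in>dual_lat G (ias_plus_pre G R e). \<exists>x\<in>eperp G e. \<exists>c::real.
                2 *\<^sub>R v = x + R *v x + c *\<^sub>R e"
    proof
      fix v assume "v \<in> dual_lat G (ias_plus_pre G R e)"
      then have vs: "v \<in> span (ias_plus_pre G R e)" and vI: "\<forall>h\<in>ias_plus_pre G R e. bf G v h \<in> \<int>"
        by (auto simp: dual_lat_def)
      have "span (ias_plus_pre G R e) \<subseteq> {z. \<exists>a. R *v z - z = a *\<^sub>R e}"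
      proof (rule span_minimal)
        show "ias_plus_pre G R e \<subseteq> {z. \<exists>a. R *v z - z = a *\<^sub>R e}" using Pdef by blast
        show "subspace {z. \<exists>a. R *v z - z = a *\<^sub>R e}"
          unfolding subspace_def
        proof (safe)
          show "\<exists>a. R *v 0 - 0 = a *\<^sub>R e" by (auto intro!: exI[of _ 0])
        next
          fix x y a b assume "R *v x - x = a *\<^sub>R e" "R *v y - y = b *\<^sub>R e"
          then show "\<exists>c. R *v (x + y) - (x + y) = c *\<^sub>R e"
            by (auto intro!: exI[of _ "a+b"] simp: mvs algebra_simps)
        next
          fix c x a assume "R *v x - x = a *\<^sub>R e"
          then show "\<exists>d. R *v (c *\<^sub>R x) - c *\<^sub>R x = d *\<^sub>R e"
            by (auto intro!: exI[of _ "c*a"] simp: mvs algebra_simps)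
        qed
      qed
      then obtain a where a: "R *v v - v = a *\<^sub>R e" using vs by blast
      have "span (ias_plus_pre G R e) \<subseteq> {z. bf G e z = 0}"
      proof (rule span_minimal)
        show "ias_plus_pre G R e \<subseteq> {z. bf G e z = 0}" using Pdef by blast
        show "subspace {z. bf G e z = 0}"
          unfolding subspace_def by (auto simp: bf_simps)
      qed
      then have ve: "bf G e v = 0" using vs by blast
      define w where "w = v + (a/2) *\<^sub>R e"
      have Rv: "R *v v = v + a *\<^sub>R e" using a by (simp add: diff_eq_eq add.commute)
      have "R *v w = v + a *\<^sub>R e - (a/2) *\<^sub>R e" unfolding w_def using Rv Re by (simp add: mvs)
      also have "\<dots> = v + (a - a/2) *\<^sub>R e" by (simp only: scaleR_diff_left add_diff_eq)
      also have "a - a/2 = a/2" by simp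
      finally have Rw: "R *v w = w" unfolding w_def .
      have wI: "\<And>h. h \<in> ias_plus_pre G R e \<Longrightarrow> bf G w h = bf G v h"
      proof -
        fix h assume "h \<in> ias_plus_pre G R e"
        then have "bf G e h = 0" using Pdef by blast
        then show "bf G w h = bf G v h" unfolding w_def by (simp add: bf_simps)
      qed
      obtain cw where cw: "cw \<in> lat" "\<forall>x\<in>{x. R *v x = 1 *\<^sub>R x} \<inter> lat. 1 * bf G w x = cw \<bullet> x"
      proof -
        have "\<forall>x\<in>{x. R *v x = 1 *\<^sub>R x} \<inter> lat. 1 * bf G w x \<in> \<int>"
        proof
          fix x assume "x \<in> {x. R *v x = 1 *\<^sub>R x} \<inter> lat"
          then have "x \<in> ias_plus_pre G R e" using C3 by (auto simp: eig_plus_def)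
          then show "1 * bf G w x \<in> \<int>" using wI vI by simp
        qed
        then show ?thesis using that ext_fun[OF linear_bf_right subspace_eig] by blast
      qed
      obtain x0 where x0: "x0 \<in> lat" "\<And>y. bf G x0 y = cw \<bullet> y" using unimod_rep[OF K3 cw(1)] by blast
      have "x0 + R *v x0 - 2 *\<^sub>R w = 0"
      proof (rule decomp_zero[OF inv d0 Gs], safe)
        fix s assume s: "s \<in> lat" "R *v s = s"
        have "bf G w s = cw \<bullet> s" using cw(2) s by auto
        then show "bf G (x0 + R *v x0 - 2 *\<^sub>R w) s = 0"
          using swap[of x0 s] s x0(2)[of s] by (simp add: bf_simps)
      next
        fix z assume z: "z \<in> lat" "R *v z = - z"
        have "R *v (x0 + R *v x0 - 2 *\<^sub>R w) = x0 + R *v x0 - 2 *\<^sub>R w"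
          using Rw RRx by (simp add: mvs)
        then have "bf G (x0 + R *v x0 - 2 *\<^sub>R w) z = - bf G (x0 + R *v x0 - 2 *\<^sub>R w) z"
          using swap[of "x0 + R *v x0 - 2 *\<^sub>R w" z] z by (simp add: bf_simps)
        then show "bf G (x0 + R *v x0 - 2 *\<^sub>R w) z = 0" by simp
      qed
      then have xw: "x0 + R *v x0 = 2 *\<^sub>R w" by simp
      have "bf G x0 (p0 + R *v p0) = bf G (x0 + R *v x0) p0"
        using swap[of x0 p0] by (simp add: bf_simps)
      also have "\<dots> = 2 * bf G w p0" using xw by (simp add: bf_simps)
      finally have "bf G x0 (p0 + R *v p0) = 2 * bf G w p0" .
      moreover have "bf G w p0 = bf G v p0" using wI p0P by blast
      moreover have "p0 + R *v p0 = 2 *\<^sub>R p0 + e" using p0R by (simp add: algebra_simps scaleR_2)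
      ultimately have "2 * bf G x0 p0 + bf G x0 e = 2 * bf G v p0" by (simp add: bf_simps)
      moreover obtain i1 where "bf G x0 p0 = of_int i1" using bfI[OF x0(1) p0l] by (auto elim: Ints_cases)
      moreover obtain i2 where "bf G v p0 = of_int i2" using vI p0P by (auto elim: Ints_cases)
      ultimately have "bf G x0 e = of_int (2 * (i2 - i1))" by simp
      then have x0e: "bf G e x0 = 2 * of_int (i2 - i1)" using sym by (metis of_int_mult of_int_numeral)
      define m where "m = i2 - i1"
      define x where "x = x0 - of_int m *\<^sub>R t2"
      have xl: "x \<in> lat" unfolding x_def by (intro lat_diff lat_scale x0(1) t2l(1))
      have "bf G e x = 0" unfolding x_def using x0e t2(2) by (simp add: bf_simps m_def)
      then have xE: "x \<in> eperp G e" using xl by (simp add: eperp_def)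
      have "x + R *v x = 2 *\<^sub>R w" unfolding x_def using xw t2l(2) by (simp add: mvs algebra_simps)
      then have "2 *\<^sub>R v = x + R *v x + (- a) *\<^sub>R e" unfolding w_def by (simp add: algebra_simps)
      then show "\<exists>x\<in>eperp G e. \<exists>c::real. 2 *\<^sub>R v = x + R *v x + c *\<^sub>R e" using xE by blast
    qed
    show "card ((\<lambda>x. (\<lambda>q. x + q) ` S_pre R e) ` ias_plus_pre G R e) = 2
          \<and> (\<forall>x\<in>eperp G e. x + R *v x \<in> S_pre R e)
          \<and> (\<forall>x\<in>eperp G e. \<exists>v\<in>dual_lat G (ias_plus_pre G R e). \<exists>c::real.
                x + R *v x = 2 *\<^sub>R v + c *\<^sub>R e)
          \<and> (\<forall>v\<in>dual_lat G (ias_plus_pre G R e). \<exists>x\<in>eperp G e. \<exists>c::real.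
                2 *\<^sub>R v = x + R *v x + c *\<^sub>R e)"
      using Ca Cb Cc Cd by blast
  qed
  show ?thesis using C1 C2 C3 C4 C5 by blast
qed

end
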